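(* Let $q_1(x),q_2(x)\in\mathbb{R}[x]$ be two monic quadratic polynomials neither of which is the square of a linear polynomial, and let $I\subseteq\mathbb{R}$ be the largest (infinite) interval on which both $q_1$ and $q_2$ are non-negative. Let $P_1,P_2,P_3,P_4\in\mathbb{R}[x]$ with $C:=\max\{\deg P_j:1\le j\le4\}\ge0$, and put $$P(x)=P_1(x)+P_2(x)\sqrt{q_1(x)}+P_3(x)\sqrt{q_2(x)}+P_4(x)\sqrt{q_1(x)q_2(x)}.$$ Then the equation $P(x)=0$ has at most $4(C+2)$ roots in $I$, unless $q_1=q_2$ and both $P_2+P_3$ and $P_1+q_1P_4$ are the zero polynomial, in which case $P(x)=0$ for every $x\in I$.
   Context: The zero polynomial is assigned degree $-1$. *)

theory Defs
  imports "HOL-Analysis.Analysis" "HOL-Computational_Algebra.Polynomial"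
begin

definition monic_quadratic :: "real poly \<Rightarrow> bool" where
  "monic_quadratic q \<longleftrightarrow> degree q = 2 \<and> lead_coeff q = 1"

definition square_of_linear :: "real poly \<Rightarrow> bool" where
  "square_of_linear q \<longleftrightarrow> (\<exists>l. degree l = 1 \<and> q = l ^ 2)"

definition largest_infinite_interval :: "real poly \<Rightarrow> real poly \<Rightarrow> real set \<Rightarrow> bool" where
  "largest_infinite_interval q1 q2 I \<longleftrightarrow>
     is_interval I \<and> \<not> bounded I \<and>
     (\<forall>x\<in>I. poly q1 x \<ge> 0 \<and> poly q2 x \<ge> 0) \<and>
     (\<forall>J. is_interval J \<and> I \<subseteq> J \<and> (\<forall>x\<in>J. poly q1 x \<ge> 0 \<and> poly q2 x \<ge> 0) \<longrightarrow> J = I)"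

end

theory Submission imports Defs begin

abbreviation cp :: "real poly \<Rightarrow> complex poly" where "cp p \<equiv> map_poly complex_of_real p"

lemma cp_add: "cp (p + q) = cp p + cp q"
  by (rule poly_eqI) (simp add: coeff_map_poly)

lemma cp_mult: "cp (p * q) = cp p * cp q"
  by (rule poly_eqI) (simp add: coeff_map_poly coeff_mult)

lemma cp_power: "cp (p ^ n) = cp p ^ n"
  by (induction n) (simp_all add: cp_mult)

lemma cp_eq_iff: "cp p = cp q \<longleftrightarrow> p = q"
  by (auto simp: poly_eq_iff coeff_map_poly)

lemma cp_eq_0: "cp p = 0 \<longleftrightarrow> p = 0"
  using cp_eq_iff[of p 0] by simp

lemma order_lin: "order z [:-w, 1:] = (if z = w then 1 else 0)"
  using order_power_n_n[of w 1] by (auto intro: order_0I)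

lemma order_two:
  fixes w1 w2 z :: complex
  shows "order z ([:-w1,1:]*[:-w2,1:]) = (if z = w1 then 1 else 0) + (if z = w2 then 1 else 0)"
  by (subst order_mult) (simp_all add: order_lin)

lemma quad_form:
  assumes "monic_quadratic q"
  shows "q = [:coeff q 0, coeff q 1, 1:]"
  using assms unfolding monic_quadratic_def
  by (intro poly_eqI) (auto simp: coeff_pCons coeff_eq_0 numeral_2_eq_2 split: nat.splits)

lemma quad_factor:
  assumes "monic_quadratic q" "\<not> square_of_linear q"
  shows "\<exists>w1 w2. w1 \<noteq> w2 \<and> cp q = [:-w1,1:]*[:-w2,1:]"
proof -
  define c0 c1 where "c0 = coeff q 0" and "c1 = coeff q 1"
  have q: "q = [:c0, c1, 1:]" using quad_form[OF assms(1)] c0_def c1_def by simp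
  define D where "D = c1^2 - 4*c0"
  have "D \<noteq> 0"
  proof
    assume "D = 0"
    hence "q = [:c1/2, 1:]^2" using q by (simp add: D_def power2_eq_square field_simps)
    moreover have "degree [:c1/2, 1::real:] = 1" by simp
    ultimately show False using assms(2) unfolding square_of_linear_def by blast
  qed
  define w where "w = csqrt (complex_of_real D)"
  have w2: "w^2 = complex_of_real D" by (simp add: w_def)
  have "w \<noteq> 0" using \<open>D \<noteq> 0\<close> by (simp add: w_def)
  define w1 w2 where "w1 = (- of_real c1 + w)/2" and "w2 = (- of_real c1 - w)/2"
  have "w1 \<noteq> w2" using \<open>w \<noteq> 0\<close> by (simp add: w1_def w2_def divide_simps)
  moreover have "cp q = [:-w1,1:]*[:-w2,1:]"
  proof -
    have "w1 * w2 = of_real c0"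
      unfolding w1_def w2_def using w2
      by (simp add: D_def field_simps power2_eq_square)
    moreover have "- w1 - w2 = of_real c1" by (simp add: w1_def w2_def field_simps)
    moreover have "[:-w1,1:]*[:-w2,1:] = [:w1*w2, -w1-w2, 1:]" by simp
    moreover have "cp q = [:of_real c0, of_real c1, 1:]" using q by (simp add: map_poly_pCons)
    ultimately show ?thesis by simp
  qed
  ultimately show ?thesis by blast
qed

lemma odd_order_nonsq:
  fixes Q X Y :: "real poly"
  assumes "Q \<noteq> 0" "odd (order z (cp Q))" "X^2 = Q*Y^2"
  shows "Y = 0"
proof (rule ccontr)
  assume Y: "Y \<noteq> 0"
  hence "X \<noteq> 0" using assms(1,3) by auto
  have e: "cp X * cp X = cp Q * (cp Y * cp Y)"
    using arg_cong[OF assms(3), of cp] by (simp add: cp_mult power2_eq_square)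
  have nz: "cp X \<noteq> 0" "cp Y \<noteq> 0" "cp Q \<noteq> 0" using Y \<open>X \<noteq> 0\<close> assms(1) by (simp_all add: cp_eq_0)
  have "order z (cp X * cp X) = 2 * order z (cp X)" using nz by (simp add: order_mult)
  moreover have "order z (cp Q * (cp Y * cp Y)) = order z (cp Q) + 2 * order z (cp Y)"
    using nz by (simp add: order_mult)
  ultimately show False using e assms(2) by (metis even_add even_mult_iff even_numeral)
qed

lemma L1:
  fixes X Y q :: "real poly"
  assumes "monic_quadratic q" "\<not> square_of_linear q" "X^2 = q*Y^2"
  shows "Y = 0 \<and> X = 0"
proof -
  obtain w1 w2 where w: "w1 \<noteq> w2" "cp q = [:-w1,1:]*[:-w2,1:]" using quad_factor[OF assms(1,2)] by blast
  have "q \<noteq> 0" using assms(1) unfolding monic_quadratic_def by auto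
  have "order w1 (cp q) = 1" by (subst w(2), subst order_two) (use w in simp)
  hence "odd (order w1 (cp q))" by simp
  hence "Y = 0" using odd_order_nonsq[OF \<open>q \<noteq> 0\<close> _ assms(3)] by blast
  thus ?thesis using assms(3) by simp
qed

lemma L2:
  fixes X Y q1 q2 :: "real poly"
  assumes "monic_quadratic q1" "\<not> square_of_linear q1"
    "monic_quadratic q2" "\<not> square_of_linear q2" "q1 \<noteq> q2" "X^2 = (q1*q2)*Y^2"
  shows "Y = 0 \<and> X = 0"
proof -
  obtain w1 w2 where w: "w1 \<noteq> w2" "cp q1 = [:-w1,1:]*[:-w2,1:]" using quad_factor[OF assms(1,2)] by blast
  obtain v1 v2 where v: "v1 \<noteq> v2" "cp q2 = [:-v1,1:]*[:-v2,1:]" using quad_factor[OF assms(3,4)] by blast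
  have nz: "q1 \<noteq> 0" "q2 \<noteq> 0" using assms(1,3) unfolding monic_quadratic_def by auto
  have ord: "order z (cp (q1*q2)) = order z (cp q1) + order z (cp q2)" for z
    using nz by (simp add: cp_mult order_mult cp_eq_0)
  have "\<exists>z. odd (order z (cp (q1*q2)))"
  proof (rule ccontr)
    assume "\<not> ?thesis"
    hence "even (order w1 (cp (q1*q2)))" "even (order w2 (cp (q1*q2)))" by auto
    moreover have "order w1 (cp q1) = 1" "order w2 (cp q1) = 1"
      by (subst w(2), subst order_two, use w in simp)+
    moreover have "order z (cp q2) = (if z = v1 then 1 else 0) + (if z = v2 then 1 else 0)" for z
      by (subst v(2), subst order_two) simp
    ultimately have "w1 \<in> {v1,v2}" "w2 \<in> {v1,v2}" unfolding ord by (auto split: if_splits)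
    hence "cp q1 = cp q2" using w v by (auto simp: mult.commute)
    thus False using assms(5) by (simp add: cp_eq_iff)
  qed
  then obtain z where "odd (order z (cp (q1*q2)))" by blast
  hence "Y = 0" using odd_order_nonsq[OF _ _ assms(6)] nz by auto
  thus ?thesis using assms(6) by simp
qed


lemma dm: "degree p \<le> m \<Longrightarrow> degree q \<le> n \<Longrightarrow> degree (p*q) \<le> m+n"
  by (meson add_mono degree_mult_le order_trans)

lemma dsq: "degree p \<le> m \<Longrightarrow> degree (p^2) \<le> 2*m"
  by (metis (no_types, lifting) degree_power_le le_trans mult.commute mult_le_mono2)

lemma dmono: "degree p \<le> m \<Longrightarrow> m \<le> n \<Longrightarrow> degree p \<le> n" by simp

lemma id2:
  fixes a b c d q s :: real
  assumes "s^2 = q"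
  shows "(a + q*d)^2 - q*(b+c)^2 = (a + b * s + c * s + d * q) * (a + d * q - (b + c) * s)"
  unfolding assms[symmetric] by algebra

lemma id4:
  fixes a b c d s t :: real
  shows "(a^2 + c^2*t^2 - s^2*(b^2+d^2*t^2))^2 - t^2*(2*(a*c - s^2*b*d))^2
     = (a+b* s+c*t+d*(s*t))*((a-b* s+c*t-d* s*t)*(a+b* s-c*t-d* s*t)*(a-b* s-c*t+d* s*t))"
  by algebra

theorem theorem5p1:
  fixes q1 q2 P1 P2 P3 P4 :: "real poly" and I :: "real set"
  assumes "monic_quadratic q1" and "monic_quadratic q2"
    and "\<not> square_of_linear q1" and "\<not> square_of_linear q2"
    and "largest_infinite_interval q1 q2 I"
    and "P1 \<noteq> 0 \<or> P2 \<noteq> 0 \<or> P3 \<noteq> 0 \<or> P4 \<noteq> 0"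
  defines "C \<equiv> Max {degree P1, degree P2, degree P3, degree P4}"
    and "P \<equiv> (\<lambda>x. poly P1 x + poly P2 x * sqrt (poly q1 x) + poly P3 x * sqrt (poly q2 x)
                  + poly P4 x * sqrt (poly q1 x * poly q2 x))"
  shows "(\<not> (q1 = q2 \<and> P2 + P3 = 0 \<and> P1 + q1 * P4 = 0) \<longrightarrow>
            finite {x\<in>I. P x = 0} \<and> card {x\<in>I. P x = 0} \<le> 4 * (C + 2))
       \<and> ((q1 = q2 \<and> P2 + P3 = 0 \<and> P1 + q1 * P4 = 0) \<longrightarrow> (\<forall>x\<in>I. P x = 0))"
proof -
  have dq1: "degree q1 = 2" and dq2: "degree q2 = 2"
    using assms(1,2) unfolding monic_quadratic_def by auto
  have q2nz: "q2 \<noteq> 0" using dq2 by auto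
  have nonneg: "\<And>x. x \<in> I \<Longrightarrow> poly q1 x \<ge> 0 \<and> poly q2 x \<ge> 0"
    using assms(5) unfolding largest_infinite_interval_def by blast
  have d1: "degree P1 \<le> C" and d2: "degree P2 \<le> C" and d3: "degree P3 \<le> C" and d4: "degree P4 \<le> C"
    unfolding C_def by (intro Max_ge; simp)+
  have bound: "finite {x\<in>I. P x = 0} \<and> card {x\<in>I. P x = 0} \<le> 4 * (C + 2)"
    if M: "M \<noteq> 0" "degree M \<le> 4*(C+2)" "\<forall>x\<in>I. P x = 0 \<longrightarrow> poly M x = 0" for M
  proof -
    have sub: "{x\<in>I. P x = 0} \<subseteq> {x. poly M x = 0}" using M(3) by auto
    have fin: "finite {x. poly M x = 0}" using poly_roots_finite[OF M(1)] .
    have "card {x\<in>I. P x = 0} \<le> card {x. poly M x = 0}" using card_mono[OF fin sub] .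
    also have "\<dots> \<le> degree M" using card_poly_roots_bound[OF M(1)] .
    finally show ?thesis using M(2) finite_subset[OF sub fin] by simp
  qed
  show ?thesis
  proof (rule conjI; intro impI)
    assume nex: "\<not> (q1 = q2 \<and> P2 + P3 = 0 \<and> P1 + q1 * P4 = 0)"
    show "finite {x\<in>I. P x = 0} \<and> card {x\<in>I. P x = 0} \<le> 4 * (C + 2)"
    proof (cases "q1 = q2")
      case True
      define M where "M = (P1 + q1*P4)^2 - q1*(P2+P3)^2"
      have "degree (P1 + q1*P4) \<le> C + 2"
        by (rule degree_add_le) (use d1 dm[OF _ d4, of q1 2] dq1 in auto)
      hence e1: "degree ((P1 + q1*P4)^2) \<le> 4*(C+2)" using dsq[of "P1 + q1*P4" "C+2"] by simp
      have "degree (P2+P3) \<le> C" using d2 d3 by (rule degree_add_le)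
      hence "degree (q1*(P2+P3)^2) \<le> 2 + 2*C" using dm[of q1 2 "(P2+P3)^2" "2*C"] dsq[of "P2+P3" C] dq1 by simp
      hence e2: "degree (q1*(P2+P3)^2) \<le> 4*(C+2)" by simp
      have degM: "degree M \<le> 4*(C+2)" unfolding M_def by (rule degree_diff_le[OF e1 e2])
      have "M \<noteq> 0"
      proof
        assume "M = 0"
        hence "(P1 + q1*P4)^2 = q1*(P2+P3)^2" by (simp add: M_def)
        from L1[OF assms(1,3) this] show False using nex True by simp
      qed
      moreover have "\<forall>x\<in>I. P x = 0 \<longrightarrow> poly M x = 0"
      proof (intro ballI impI)
        fix x assume x: "x \<in> I" "P x = 0"
        define s where "s = sqrt (poly q1 x)"
        have nn: "poly q1 x \<ge> 0" using nonneg[OF x(1)] by simp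
        have s2: "s^2 = poly q1 x" using nn by (simp add: s_def)
        have sq: "sqrt (poly q1 x * poly q1 x) = poly q1 x" using nn by simp
        have "P x = poly P1 x + poly P2 x * s + poly P3 x * s + poly P4 x * poly q1 x"
          using True sq by (simp add: P_def s_def)
        hence "poly M x = P x * (poly P1 x + poly P4 x * poly q1 x - (poly P2 x + poly P3 x) * s)"
          using id2[OF s2, of "poly P1 x" "poly P4 x" "poly P2 x" "poly P3 x"]
          by (simp add: M_def)
        thus "poly M x = 0" using x(2) by simp
      qed
      ultimately show ?thesis using bound degM by blast
    next
      case False
      define A where "A = P1^2 + P3^2*q2 - q1*(P2^2 + P4^2*q2)"
      define B where "B = smult 2 (P1*P3 - q1*P2*P4)"
      define N where "N = A^2 - q2*B^2"
      have a1: "degree (P1^2) \<le> 2*C" using dsq[OF d1] .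
      have a2: "degree (P3^2*q2) \<le> 2*C + 2" using dm[OF dsq[OF d3], of q2 2] dq2 by simp
      have a3': "degree (P2^2 + P4^2*q2) \<le> 2*C+2"
        by (rule degree_add_le) (use dsq[OF d2] dm[OF dsq[OF d4], of q2 2] dq2 in auto)
      have a3: "degree (q1*(P2^2 + P4^2*q2)) \<le> 2 + (2*C+2)" using dm[OF _ a3', of q1 2] dq1 by simp
      have degA: "degree A \<le> 2*C+4" unfolding A_def
        by (intro degree_diff_le degree_add_le) (use a1 a2 a3 in auto)
      have b1: "degree (P1*P3) \<le> C + C" using dm[OF d1 d3] .
      have b2: "degree (q1*P2*P4) \<le> 2 + C + C" using dm[OF dm[OF _ d2, of q1 2] d4] dq1 by simp
      have "degree (P1*P3 - q1*P2*P4) \<le> 2*C+2"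
        by (rule degree_diff_le) (use b1 b2 in auto)
      hence degB: "degree B \<le> 2*C+2" unfolding B_def using degree_smult_le le_trans by blast
      have n1: "degree (A^2) \<le> 4*(C+2)" using dsq[OF degA] by simp
      have n2: "degree (q2*B^2) \<le> 4*(C+2)" using dm[OF _ dsq[OF degB], of q2 2] dq2 by simp
      have degN: "degree N \<le> 4*(C+2)" unfolding N_def by (rule degree_diff_le[OF n1 n2])
      have "N \<noteq> 0"
      proof
        assume "N = 0"
        hence "A^2 = q2*B^2" by (simp add: N_def)
        from L1[OF assms(2,4) this] have "A = 0" "B = 0" by auto
        hence E1: "P1^2 + q2*P3^2 = q1*(P2^2 + q2*P4^2)" and E2: "P1*P3 = q1*P2*P4"
          by (simp_all add: A_def B_def algebra_simps)
        have "(P1^2 - q2*P3^2)^2 = (q1*(P2^2 - q2*P4^2))^2" using E1 E2 by algebra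
        hence "P1^2 - q2*P3^2 = q1*(P2^2 - q2*P4^2) \<or> P1^2 - q2*P3^2 = - (q1*(P2^2 - q2*P4^2))"
          by (simp add: power2_eq_iff)
        thus False
        proof
          assume E3: "P1^2 - q2*P3^2 = q1*(P2^2 - q2*P4^2)"
          have "2*(P1^2 - q1*P2^2) = 0" using E1 E3 by algebra
          hence "P1^2 = q1*P2^2" by simp
          from L1[OF assms(1,3) this] have z1: "P1 = 0" "P2 = 0" by auto
          have "(2*q2)*(P3^2 - q1*P4^2) = 0" using E1 E3 by algebra
          hence "P3^2 = q1*P4^2" using q2nz by simp
          from L1[OF assms(1,3) this] have "P3 = 0" "P4 = 0" by auto
          thus False using z1 assms(6) by simp
        next
          assume E3: "P1^2 - q2*P3^2 = - (q1*(P2^2 - q2*P4^2))"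
          have "2*(P1^2 - (q1*q2)*P4^2) = 0" using E1 E3 by algebra
          hence "P1^2 = (q1*q2)*P4^2" by simp
          from L2[OF assms(1,3,2,4) False this] have z1: "P1 = 0" "P4 = 0" by auto
          have "(2*q2)*(q2*P3^2 - q1*P2^2) = 0" using E1 E3 by algebra
          hence "(q2*P3)^2 = (q1*q2)*P2^2" using q2nz by (simp add: algebra_simps power2_eq_square)
          from L2[OF assms(1,3,2,4) False this] have "P2 = 0" "P3 = 0" using q2nz by auto
          thus False using z1 assms(6) by simp
        qed
      qed
      moreover have "\<forall>x\<in>I. P x = 0 \<longrightarrow> poly N x = 0"
      proof (intro ballI impI)
        fix x assume x: "x \<in> I" "P x = 0"
        define s where "s = sqrt (poly q1 x)"
        define t where "t = sqrt (poly q2 x)"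
        have nn: "poly q1 x \<ge> 0" "poly q2 x \<ge> 0" using nonneg[OF x(1)] by auto
        have s2: "poly q1 x = s^2" using nn by (simp add: s_def)
        have t2: "poly q2 x = t^2" using nn by (simp add: t_def)
        have st: "sqrt (poly q1 x * poly q2 x) = s*t" by (simp add: s_def t_def real_sqrt_mult)
        have Px: "P x = poly P1 x + poly P2 x * s + poly P3 x * t + poly P4 x * (s*t)"
          using st by (simp add: P_def s_def t_def)
        have "poly N x = P x * ((poly P1 x - poly P2 x* s + poly P3 x*t - poly P4 x* s*t)*(poly P1 x + poly P2 x* s - poly P3 x*t - poly P4 x* s*t)*(poly P1 x - poly P2 x* s - poly P3 x*t + poly P4 x* s*t))"
          unfolding Px using id4[of "poly P1 x" "poly P3 x" t s "poly P2 x" "poly P4 x"]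
          by (simp add: N_def A_def B_def s2 t2 algebra_simps)
        thus "poly N x = 0" using x(2) by simp
      qed
      ultimately show ?thesis using bound degN by blast
    qed
  next
    assume ex: "q1 = q2 \<and> P2 + P3 = 0 \<and> P1 + q1 * P4 = 0"
    show "\<forall>x\<in>I. P x = 0"
    proof
      fix x assume x: "x \<in> I"
      have nn: "poly q1 x \<ge> 0" using nonneg[OF x] by simp
      have h1: "poly P3 x = - poly P2 x" using arg_cong[of _ _ "\<lambda>p. poly p x", OF conjunct1[OF conjunct2[OF ex]]] by simp
      have h2: "poly P1 x = - poly q1 x * poly P4 x" using arg_cong[of _ _ "\<lambda>p. poly p x", OF conjunct2[OF conjunct2[OF ex]]] by simp
      show "P x = 0" using ex nn h1 h2 by (simp add: P_def)
    qed
  qed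
qed

end
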